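(* Let $G_1$ and $G_2$ be vertex-disjoint finite simple graphs and let $G=G_1*G_2$ be their join. If $G$ is not a complete multipartite graph, then (a) ${\rm v}(I_c(G))=\min\{{\rm v}(I_c(G_1))+|V(G_2)|,\ {\rm v}(I_c(G_2))+|V(G_1)|\}$, and (b) ${\rm v}(I_c(G))={\rm v}(I_c(G_1))+|V(G_2)|$ if $G_2$ is a discrete graph (has no edges).
   Context: The join $G_1*G_2$ consists of $G_1\cup G_2$ together with all edges joining a vertex of $G_1$ with a vertex of $G_2$. A graph is complete multipartite if it is a join $H_1*\cdots*H_k$, $k\ge2$, of pairwise vertex-disjoint graphs without edges. For a graph $H$ with vertex set $\{t_1,\ldots,t_n\}$, $I_c(H)$ is the ideal of $K[t_1,\ldots,t_n]$ ($K$ a field) generated by $\prod_{t_i\in C}t_i$ over all minimal vertex covers $C$ of $H$ (vertex cover: subset of vertices meeting every edge). For a graded ideal $I$ of a standard graded polynomial ring $R$, ${\rm v}(I)=\min\{d\ge0:\exists f\in R_d,\ \exists\mathfrak p\in{\rm Ass}(I),\ (I\colon f)=\mathfrak p\}$. *)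

theory Defs
  imports "HOL-Library.Poly_Mapping" "HOL-Library.Extended_Nat"
begin

definition simple_graph :: "'v set \<Rightarrow> 'v set set \<Rightarrow> bool" where
  "simple_graph V E \<longleftrightarrow> finite V \<and> (\<forall>e\<in>E. e \<subseteq> V \<and> card e = 2)"

definition join_edges :: "'v set \<Rightarrow> 'v set set \<Rightarrow> 'v set \<Rightarrow> 'v set set \<Rightarrow> 'v set set" where
  "join_edges V1 E1 V2 E2 = E1 \<union> E2 \<union> {{a, b} | a b. a \<in> V1 \<and> b \<in> V2}"

text \<open>Complete multipartite: the join of k >= 2 pairwise vertex-disjoint (nonempty)
  edgeless graphs, i.e. a partition of V into k >= 2 nonempty blocks such that the edges
  are exactly the pairs of vertices lying in different blocks.\<close>

definition complete_multipartite :: "'v set \<Rightarrow> 'v set set \<Rightarrow> bool" where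
  "complete_multipartite V E \<longleftrightarrow>
     (\<exists>P. finite P \<and> card P \<ge> 2 \<and> (\<forall>B\<in>P. B \<noteq> {}) \<and> \<Union>P = V \<and>
          (\<forall>B\<in>P. \<forall>B'\<in>P. B \<noteq> B' \<longrightarrow> B \<inter> B' = {}) \<and>
          E = {{a, b} | a b. \<exists>B\<in>P. \<exists>B'\<in>P. B \<noteq> B' \<and> a \<in> B \<and> b \<in> B'})"

definition vertex_cover :: "'v set \<Rightarrow> 'v set set \<Rightarrow> 'v set \<Rightarrow> bool" where
  "vertex_cover V E C \<longleftrightarrow> C \<subseteq> V \<and> (\<forall>e\<in>E. e \<inter> C \<noteq> {})"

definition minimal_vertex_cover :: "'v set \<Rightarrow> 'v set set \<Rightarrow> 'v set \<Rightarrow> bool" where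
  "minimal_vertex_cover V E C \<longleftrightarrow>
     vertex_cover V E C \<and> (\<forall>C'. C' \<subset> C \<longrightarrow> \<not> vertex_cover V E C')"

text \<open>Polynomials in variables indexed by 'v with coefficients in 'k are elements of
  ('v =>0 nat) =>0 k; the ring K[t_v : v in V] is the subring of
  polynomials involving only variables from V.\<close>

type_synonym ('v, 'k) mpoly = "('v \<Rightarrow>\<^sub>0 nat) \<Rightarrow>\<^sub>0 'k"

definition poly_ring :: "'v set \<Rightarrow> ('v, 'k::field) mpoly set" where
  "poly_ring V = {f. \<forall>m\<in>Poly_Mapping.keys f. Poly_Mapping.keys m \<subseteq> V}"

definition var :: "'v \<Rightarrow> ('v, 'k::field) mpoly" where
  "var v = Poly_Mapping.single (Poly_Mapping.single v 1) 1"

definition mdeg :: "('v \<Rightarrow>\<^sub>0 nat) \<Rightarrow> nat" where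
  "mdeg m = (\<Sum>v\<in>Poly_Mapping.keys m. Poly_Mapping.lookup m v)"

definition homog_comp :: "'v set \<Rightarrow> nat \<Rightarrow> ('v, 'k::field) mpoly set" where
  "homog_comp V d = {f \<in> poly_ring V. \<forall>m\<in>Poly_Mapping.keys f. mdeg m = d}"

definition is_ideal :: "'v set \<Rightarrow> ('v, 'k::field) mpoly set \<Rightarrow> bool" where
  "is_ideal V I \<longleftrightarrow> I \<subseteq> poly_ring V \<and> 0 \<in> I \<and> (\<forall>f\<in>I. \<forall>g\<in>I. f + g \<in> I) \<and>
     (\<forall>r\<in>poly_ring V. \<forall>f\<in>I. r * f \<in> I)"

definition ideal_gen :: "'v set \<Rightarrow> ('v, 'k::field) mpoly set \<Rightarrow> ('v, 'k) mpoly set" where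
  "ideal_gen V S = \<Inter>{I. is_ideal V I \<and> S \<subseteq> I}"

definition prime_ideal :: "'v set \<Rightarrow> ('v, 'k::field) mpoly set \<Rightarrow> bool" where
  "prime_ideal V P \<longleftrightarrow> is_ideal V P \<and> P \<noteq> poly_ring V \<and>
     (\<forall>f\<in>poly_ring V. \<forall>g\<in>poly_ring V. f * g \<in> P \<longrightarrow> f \<in> P \<or> g \<in> P)"

definition colon :: "'v set \<Rightarrow> ('v, 'k::field) mpoly set \<Rightarrow> ('v, 'k) mpoly \<Rightarrow> ('v, 'k) mpoly set" where
  "colon V I f = {g \<in> poly_ring V. g * f \<in> I}"

definition Ass :: "'v set \<Rightarrow> ('v, 'k::field) mpoly set \<Rightarrow> ('v, 'k) mpoly set set" where
  "Ass V I = {P. prime_ideal V P \<and> (\<exists>f\<in>poly_ring V. colon V I f = P)}"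

text \<open>The v-number; value \<infinity> when no such d exists (e.g. I the unit ideal).\<close>

definition v_number :: "'v set \<Rightarrow> ('v, 'k::field) mpoly set \<Rightarrow> enat" where
  "v_number V I =
     (if \<exists>d. \<exists>f\<in>homog_comp V d. \<exists>P\<in>Ass V I. colon V I f = P
      then enat (LEAST d. \<exists>f\<in>homog_comp V d. \<exists>P\<in>Ass V I. colon V I f = P)
      else \<infinity>)"

definition cover_ideal :: "'v set \<Rightarrow> 'v set set \<Rightarrow> ('v, 'k::field) mpoly set" where
  "cover_ideal V E = ideal_gen V {(\<Prod>v\<in>C. var v) | C. minimal_vertex_cover V E C}"

end

theory Submission
  imports Defs
begin

lemma keys_add_nat: "Poly_Mapping.keys ((a::'v \<Rightarrow>\<^sub>0 nat) + b) = Poly_Mapping.keys a \<union> Poly_Mapping.keys b"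
  by (auto simp: in_keys_iff lookup_add)

lemma poly_expand: "p = (\<Sum>m\<in>Poly_Mapping.keys p. Poly_Mapping.single m (Poly_Mapping.lookup p m))"
proof (rule poly_mapping_eqI)
  fix k
  show "Poly_Mapping.lookup p k = Poly_Mapping.lookup (\<Sum>m\<in>Poly_Mapping.keys p. Poly_Mapping.single m (Poly_Mapping.lookup p m)) k"
    by (simp add: lookup_sum lookup_single when_def in_keys_iff)
qed

lemma lookup_mult_single_right:
  fixes g :: "('a::cancel_comm_monoid_add) \<Rightarrow>\<^sub>0 ('b::comm_semiring_1)"
  shows "Poly_Mapping.lookup (g * Poly_Mapping.single k c) (m + k) = Poly_Mapping.lookup g m * c"
proof -
  have "(\<Sum>q. (Poly_Mapping.lookup (Poly_Mapping.single k c) q when m + k = l + q)) = (c when l = m)" for l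
  proof -
    have "(\<Sum>q. (Poly_Mapping.lookup (Poly_Mapping.single k c) q when m + k = l + q))
       = (\<Sum>q. ((c when m + k = l + q) when k = q))"
      by (simp add: lookup_single when_commute)
    also have "\<dots> = (c when m + k = l + k)" by (rule Sum_any_when_equal')
    also have "\<dots> = (c when l = m)" by (rule when_cong) auto
    finally show ?thesis .
  qed
  then have "Poly_Mapping.lookup (g * Poly_Mapping.single k c) (m + k) = (\<Sum>l. (Poly_Mapping.lookup g l * c when l = m))"
    by (simp add: lookup_mult mult_when)
  also have "\<dots> = Poly_Mapping.lookup g m * c" by (rule Sum_any_when_equal)
  finally show ?thesis .
qed

fun enc :: "'v list \<Rightarrow> nat \<Rightarrow> ('v \<Rightarrow>\<^sub>0 nat) \<Rightarrow> nat" where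
  "enc [] B m = 0"
| "enc (x # xs) B m = Poly_Mapping.lookup m x + B * enc xs B m"

lemma enc_add: "enc xs B (a + b) = enc xs B a + enc xs B b"
  by (induction xs) (simp_all add: lookup_add algebra_simps)

lemma digit_eq:
  fixes c c' e e' B :: nat
  assumes "c < B" "c' < B" "c + B * e = c' + B * e'"
  shows "c = c' \<and> e = e'"
proof -
  have "(c + B * e) mod B = c" using assms(1) by simp
  moreover have "(c' + B * e') mod B = c'" using assms(2) by simp
  ultimately have 1: "c = c'" using assms(3) by simp
  then have "B * e = B * e'" using assms(3) by simp
  moreover have "B > 0" using assms(1) by simp
  ultimately show ?thesis using 1 by simp
qed

lemma enc_inj:
  assumes "\<forall>x. Poly_Mapping.lookup m x < B" "\<forall>x. Poly_Mapping.lookup m' x < B"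
    and "enc xs B m = enc xs B m'" and "x \<in> set xs"
  shows "Poly_Mapping.lookup m x = Poly_Mapping.lookup m' x"
  using assms(3,4)
proof (induction xs)
  case Nil
  then show ?case by simp
next
  case (Cons y ys)
  have "Poly_Mapping.lookup m y = Poly_Mapping.lookup m' y \<and> enc ys B m = enc ys B m'"
    using digit_eq[of "Poly_Mapping.lookup m y" B "Poly_Mapping.lookup m' y" "enc ys B m" "enc ys B m'"]
      assms(1,2) Cons.prems(1) by simp
  then show ?case using Cons by auto
qed

lemma enc_inj2:
  assumes "\<forall>x. Poly_Mapping.lookup m x < B" "\<forall>x. Poly_Mapping.lookup m' x < B"
    and "enc xs B m = enc xs B m'"
    and "Poly_Mapping.keys m \<subseteq> set xs" "Poly_Mapping.keys m' \<subseteq> set xs"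
  shows "m = m'"
proof (rule poly_mapping_eqI)
  fix x
  show "Poly_Mapping.lookup m x = Poly_Mapping.lookup m' x"
  proof (cases "x \<in> set xs")
    case True
    then show ?thesis by (rule enc_inj[OF assms(1,2,3)])
  next
    case False
    then have "x \<notin> Poly_Mapping.keys m" "x \<notin> Poly_Mapping.keys m'" using assms(4,5) by auto
    then show ?thesis by (simp add: in_keys_iff)
  qed
qed

lemma no_zero_div:
  fixes f g :: "('v \<Rightarrow>\<^sub>0 nat) \<Rightarrow>\<^sub>0 'k::field"
  assumes "f \<noteq> 0" "g \<noteq> 0"
  shows "f * g \<noteq> 0"
proof -
  define K where "K = Poly_Mapping.keys f \<union> Poly_Mapping.keys g"
  have finK: "finite K" unfolding K_def by simp
  define X where "X = \<Union> (Poly_Mapping.keys ` K)"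
  have finX: "finite X" unfolding X_def using finK by simp
  obtain xs where xs: "set xs = X" using finite_list[OF finX] by blast
  define B where "B = Suc (\<Sum>m\<in>K. \<Sum>x\<in>X. Poly_Mapping.lookup m x)"
  have bound: "\<forall>x. Poly_Mapping.lookup m x < B" if "m \<in> K" for m
  proof
    fix x
    show "Poly_Mapping.lookup m x < B"
    proof (cases "x \<in> X")
      case True
      have "Poly_Mapping.lookup m x \<le> (\<Sum>x\<in>X. Poly_Mapping.lookup m x)"
        using True finX by (simp add: member_le_sum)
      also have "\<dots> \<le> (\<Sum>m\<in>K. \<Sum>x\<in>X. Poly_Mapping.lookup m x)"
        by (rule member_le_sum) (use that finK in auto)
      finally show ?thesis unfolding B_def by simp
    next
      case False
      then have "x \<notin> Poly_Mapping.keys m" using that unfolding X_def by auto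
      then show ?thesis by (simp add: in_keys_iff B_def)
    qed
  qed
  define w where "w = enc xs B"
  have winj: "a = b" if "a \<in> K" "b \<in> K" "w a = w b" for a b
    using enc_inj2[OF bound[OF that(1)] bound[OF that(2)]] that xs unfolding w_def X_def by blast
  have wadd: "w (a + b) = w a + w b" for a b unfolding w_def by (rule enc_add)
  have kf: "Poly_Mapping.keys f \<noteq> {}" "finite (Poly_Mapping.keys f)" using assms by auto
  obtain mf where mf: "mf \<in> Poly_Mapping.keys f" "\<forall>a\<in>Poly_Mapping.keys f. w a \<le> w mf"
  proof -
    have "Max (w ` Poly_Mapping.keys f) \<in> w ` Poly_Mapping.keys f" using kf by simp
    then obtain mf where "mf \<in> Poly_Mapping.keys f" "w mf = Max (w ` Poly_Mapping.keys f)" by auto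
    then show ?thesis using that kf by simp
  qed
  have kg: "Poly_Mapping.keys g \<noteq> {}" "finite (Poly_Mapping.keys g)" using assms by auto
  obtain mg where mg: "mg \<in> Poly_Mapping.keys g" "\<forall>a\<in>Poly_Mapping.keys g. w a \<le> w mg"
  proof -
    have "Max (w ` Poly_Mapping.keys g) \<in> w ` Poly_Mapping.keys g" using kg by simp
    then obtain mg where "mg \<in> Poly_Mapping.keys g" "w mg = Max (w ` Poly_Mapping.keys g)" by auto
    then show ?thesis using that kg by simp
  qed
  have van: "Poly_Mapping.lookup (p * q) (mf + mg) = 0"
    if "Poly_Mapping.keys p \<subseteq> Poly_Mapping.keys f" "Poly_Mapping.keys q \<subseteq> Poly_Mapping.keys g"
      "mf \<notin> Poly_Mapping.keys p \<or> mg \<notin> Poly_Mapping.keys q" for p q :: "('v \<Rightarrow>\<^sub>0 nat) \<Rightarrow>\<^sub>0 'k"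
  proof (rule ccontr)
    assume "Poly_Mapping.lookup (p * q) (mf + mg) \<noteq> 0"
    then have "mf + mg \<in> Poly_Mapping.keys (p * q)" by (simp add: in_keys_iff)
    then obtain a b where ab: "a \<in> Poly_Mapping.keys p" "b \<in> Poly_Mapping.keys q" "mf + mg = a + b"
      using keys_mult by blast
    have "w a \<le> w mf" "w b \<le> w mg" using ab that mf mg by auto
    moreover have "w mf + w mg = w a + w b" using ab(3) wadd by metis
    ultimately have "w a = w mf" "w b = w mg" by linarith+
    then have "a = mf" "b = mg" using winj ab that mf mg unfolding K_def by blast+
    then show False using ab that by blast
  qed
  define cf where "cf = Poly_Mapping.lookup f mf"
  define cg where "cg = Poly_Mapping.lookup g mg"
  have cf: "cf \<noteq> 0" "cg \<noteq> 0" using mf mg unfolding cf_def cg_def by (auto simp: in_keys_iff)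
  define f' where "f' = f - Poly_Mapping.single mf cf"
  define g' where "g' = g - Poly_Mapping.single mg cg"
  have lf': "Poly_Mapping.lookup f' x = (if x = mf then 0 else Poly_Mapping.lookup f x)" for x
    unfolding f'_def cf_def by (simp add: lookup_minus lookup_single)
  have kf': "Poly_Mapping.keys f' \<subseteq> Poly_Mapping.keys f" "mf \<notin> Poly_Mapping.keys f'"
    by (auto simp: in_keys_iff lf' split: if_splits)
  have lg': "Poly_Mapping.lookup g' x = (if x = mg then 0 else Poly_Mapping.lookup g x)" for x
    unfolding g'_def cg_def by (simp add: lookup_minus lookup_single)
  have kg': "Poly_Mapping.keys g' \<subseteq> Poly_Mapping.keys g" "mg \<notin> Poly_Mapping.keys g'"
    by (auto simp: in_keys_iff lg' split: if_splits)
  have ksf: "Poly_Mapping.keys (Poly_Mapping.single mf cf) \<subseteq> Poly_Mapping.keys f"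
    using mf by simp
  have ksg: "Poly_Mapping.keys (Poly_Mapping.single mg cg) \<subseteq> Poly_Mapping.keys g"
    using mg by simp
  have f_eq: "f = Poly_Mapping.single mf cf + f'" unfolding f'_def by simp
  have g_eq: "g = Poly_Mapping.single mg cg + g'" unfolding g'_def by simp
  have eq: "f * g = Poly_Mapping.single mf cf * Poly_Mapping.single mg cg + Poly_Mapping.single mf cf * g'
      + f' * Poly_Mapping.single mg cg + f' * g'"
    apply (subst f_eq, subst g_eq)
    by (simp only: distrib_left distrib_right add.assoc add.left_commute)
  have v1: "Poly_Mapping.lookup (Poly_Mapping.single mf cf * g') (mf + mg) = 0"
    using van[OF ksf kg'(1)] kg'(2) by blast
  have v2: "Poly_Mapping.lookup (f' * Poly_Mapping.single mg cg) (mf + mg) = 0"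
    using van[OF kf'(1) ksg] kf'(2) by blast
  have v3: "Poly_Mapping.lookup (f' * g') (mf + mg) = 0"
    using van[OF kf'(1) kg'(1)] kf'(2) by blast
  have "Poly_Mapping.lookup (f * g) (mf + mg) = cf * cg"
    unfolding eq lookup_add v1 v2 v3 mult_single by simp
  then show ?thesis using cf by auto
qed

definition cov :: "'v set set \<Rightarrow> 'v set \<Rightarrow> bool" where
  "cov E S \<longleftrightarrow> (\<forall>e\<in>E. e \<inter> S \<noteq> {})"

definition MI :: "'v set \<Rightarrow> 'v set set \<Rightarrow> ('v, 'k::field) mpoly set" where
  "MI V E = {g \<in> poly_ring V. \<forall>m\<in>Poly_Mapping.keys g. cov E (Poly_Mapping.keys m)}"

definition Qe :: "'v set \<Rightarrow> ('v, 'k::field) mpoly set" where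
  "Qe e = {g. \<forall>m\<in>Poly_Mapping.keys g. Poly_Mapping.keys m \<inter> e \<noteq> {}}"

definition mon :: "'v set \<Rightarrow> ('v \<Rightarrow>\<^sub>0 nat)" where
  "mon C = (\<Sum>v\<in>C. Poly_Mapping.single v 1)"

lemma lookup_mon: "finite C \<Longrightarrow> Poly_Mapping.lookup (mon C) v = (if v \<in> C then 1 else 0)"
  unfolding mon_def by (simp add: lookup_sum lookup_single when_def)

lemma keys_mon: "finite C \<Longrightarrow> Poly_Mapping.keys (mon C) = C"
  by (auto simp: in_keys_iff lookup_mon split: if_splits)

lemma mdeg_mon: "finite C \<Longrightarrow> mdeg (mon C) = card C"
  unfolding mdeg_def by (simp add: keys_mon lookup_mon)

lemma prod_var: "finite C \<Longrightarrow> (\<Prod>v\<in>C. var v) = (Poly_Mapping.single (mon C) 1 :: ('v, 'k::field) mpoly)"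
proof (induction C rule: finite_induct)
  case empty
  then show ?case by (simp add: mon_def)
next
  case (insert x F)
  have "mon (insert x F) = Poly_Mapping.single x 1 + mon F"
    using insert unfolding mon_def by simp
  then show ?case using insert by (simp add: var_def mult_single)
qed

lemma card_keys_le_mdeg: "card (Poly_Mapping.keys m) \<le> mdeg m"
proof -
  have "card (Poly_Mapping.keys m) = (\<Sum>v\<in>Poly_Mapping.keys m. (1::nat))" by simp
  also have "\<dots> \<le> mdeg m" unfolding mdeg_def
    by (rule sum_mono) (simp add: in_keys_iff Suc_le_eq)
  finally show ?thesis .
qed

lemma pr_zero: "0 \<in> poly_ring V" by (simp add: poly_ring_def)
lemma pr_one: "1 \<in> poly_ring V" by (simp add: poly_ring_def)
lemma pr_add: "f \<in> poly_ring V \<Longrightarrow> g \<in> poly_ring V \<Longrightarrow> f + g \<in> poly_ring V"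
  unfolding poly_ring_def using keys_add[of f g] by blast
lemma pr_diff: "f \<in> poly_ring V \<Longrightarrow> g \<in> poly_ring V \<Longrightarrow> f - g \<in> poly_ring V"
  unfolding poly_ring_def using keys_diff[of f g] by blast
lemma pr_mult: "f \<in> poly_ring V \<Longrightarrow> g \<in> poly_ring V \<Longrightarrow> f * g \<in> poly_ring V"
  unfolding poly_ring_def using keys_mult[of f g] by (fastforce simp: keys_add_nat)
lemma pr_single: "Poly_Mapping.keys m \<subseteq> V \<Longrightarrow> Poly_Mapping.single m c \<in> poly_ring V"
  unfolding poly_ring_def by simp
lemma pr_var: "v \<in> V \<Longrightarrow> var v \<in> poly_ring V"
  unfolding var_def by (rule pr_single) simp

lemma Qe_zero: "0 \<in> Qe e" by (simp add: Qe_def)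
lemma Qe_add: "f \<in> Qe e \<Longrightarrow> g \<in> Qe e \<Longrightarrow> f + g \<in> Qe e"
  unfolding Qe_def using keys_add[of f g] by blast
lemma Qe_diff: "f \<in> Qe e \<Longrightarrow> g \<in> Qe e \<Longrightarrow> f - g \<in> Qe e"
  unfolding Qe_def using keys_diff[of f g] by blast
lemma Qe_multL: "g \<in> Qe e \<Longrightarrow> r * g \<in> Qe e"
  unfolding Qe_def using keys_mult[of r g] by (fastforce simp: keys_add_nat)
lemma Qe_multR: "g \<in> Qe e \<Longrightarrow> g * r \<in> Qe e"
  using Qe_multL[of g e r] by (simp add: mult.commute)
lemma one_notin_Qe: "(1::('v,'k::field) mpoly) \<notin> Qe e"
  unfolding Qe_def by simp

definition restr :: "('a \<Rightarrow> bool) \<Rightarrow> ('a \<Rightarrow>\<^sub>0 'b::zero) \<Rightarrow> 'a \<Rightarrow>\<^sub>0 'b" where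
  "restr P p = Abs_poly_mapping (\<lambda>x. if P x then Poly_Mapping.lookup p x else 0)"

lemma lookup_restr: "Poly_Mapping.lookup (restr P p) x = (if P x then Poly_Mapping.lookup p x else 0)"
proof -
  have "finite {x. (if P x then Poly_Mapping.lookup p x else 0) \<noteq> 0}"
    by (rule finite_subset[of _ "Poly_Mapping.keys p"]) (auto simp: in_keys_iff)
  then show ?thesis unfolding restr_def by (simp add: Abs_poly_mapping_inverse)
qed

lemma Qe_prime:
  fixes f g :: "('v, 'k::field) mpoly"
  assumes "f * g \<in> Qe e"
  shows "f \<in> Qe e \<or> g \<in> Qe e"
proof (rule ccontr)
  assume nn: "\<not> (f \<in> Qe e \<or> g \<in> Qe e)"
  define P where "P = (\<lambda>m::'v \<Rightarrow>\<^sub>0 nat. Poly_Mapping.keys m \<inter> e = {})"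
  define f0 where "f0 = restr P f"
  define g0 where "g0 = restr P g"
  define f1 where "f1 = f - f0"
  define g1 where "g1 = g - g0"
  have f1: "f1 \<in> Qe e" unfolding Qe_def f1_def f0_def
    by (auto simp: in_keys_iff lookup_minus lookup_restr P_def)
  have g1: "g1 \<in> Qe e" unfolding Qe_def g1_def g0_def
    by (auto simp: in_keys_iff lookup_minus lookup_restr P_def)
  have f0k: "P m" if "m \<in> Poly_Mapping.keys f0" for m
    using that unfolding f0_def by (auto simp: in_keys_iff lookup_restr split: if_splits)
  have g0k: "P m" if "m \<in> Poly_Mapping.keys g0" for m
    using that unfolding g0_def by (auto simp: in_keys_iff lookup_restr split: if_splits)
  have "f0 \<noteq> 0"
  proof -
    obtain m where "m \<in> Poly_Mapping.keys f" "P m" using nn unfolding Qe_def P_def by auto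
    then have "Poly_Mapping.lookup f0 m \<noteq> 0" unfolding f0_def by (simp add: lookup_restr in_keys_iff)
    then show ?thesis by auto
  qed
  moreover have "g0 \<noteq> 0"
  proof -
    obtain m where "m \<in> Poly_Mapping.keys g" "P m" using nn unfolding Qe_def P_def by auto
    then have "Poly_Mapping.lookup g0 m \<noteq> 0" unfolding g0_def by (simp add: lookup_restr in_keys_iff)
    then show ?thesis by auto
  qed
  ultimately have nz: "f0 * g0 \<noteq> 0" by (rule no_zero_div)
  have avoid: "P m" if mk: "m \<in> Poly_Mapping.keys (f0 * g0)" for m
  proof -
    obtain a b where "a \<in> Poly_Mapping.keys f0" "b \<in> Poly_Mapping.keys g0" "m = a + b"
      using keys_mult[of f0 g0] mk by blast
    then show ?thesis using f0k g0k unfolding P_def by (auto simp: keys_add_nat)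
  qed
  have fg: "f * g = f0 * g0 + (f0 * g1 + f1 * g0 + f1 * g1)"
    unfolding f1_def g1_def by (simp add: algebra_simps)
  have "f0 * g1 + f1 * g0 + f1 * g1 \<in> Qe e"
    using f1 g1 by (intro Qe_add Qe_multL Qe_multR)
  then have "f0 * g0 \<in> Qe e" using assms fg Qe_diff
    by (metis add_diff_cancel_right')
  then have "Poly_Mapping.keys (f0 * g0) = {}" using avoid unfolding Qe_def P_def by blast
  then show False using nz by simp
qed

section \<open>The monomial description of the cover ideal\<close>

lemma MI_ideal: "is_ideal V (MI V E :: ('v, 'k::field) mpoly set)"
  unfolding is_ideal_def
proof (intro conjI ballI)
  show "MI V E \<subseteq> poly_ring V" unfolding MI_def by auto
  show "0 \<in> MI V E" unfolding MI_def by (simp add: pr_zero)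
  fix f g :: "('v, 'k) mpoly" assume f: "f \<in> MI V E"
  {
    assume g: "g \<in> MI V E"
    show "f + g \<in> MI V E" using f g keys_add[of f g] unfolding MI_def by (auto intro: pr_add)
  }
  {
    fix r :: "('v, 'k) mpoly" assume r: "r \<in> poly_ring V" and "g \<in> MI V E"
    then have g: "g \<in> poly_ring V" "\<forall>m\<in>Poly_Mapping.keys g. cov E (Poly_Mapping.keys m)"
      unfolding MI_def by auto
    have "r * g \<in> poly_ring V" using r g(1) by (rule pr_mult)
    moreover have "cov E (Poly_Mapping.keys m)" if m: "m \<in> Poly_Mapping.keys (r * g)" for m
    proof -
      obtain a b where ab: "a \<in> Poly_Mapping.keys r" "b \<in> Poly_Mapping.keys g" "m = a + b"
        using keys_mult[of r g] m by blast
      have "cov E (Poly_Mapping.keys b)" using g(2) ab(2) by blast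
      then show ?thesis unfolding cov_def ab(3) keys_add_nat by blast
    qed
    ultimately show "r * g \<in> MI V E" unfolding MI_def by blast
  }
qed

lemma ideal_sum: "is_ideal V I \<Longrightarrow> (\<And>x. x \<in> S \<Longrightarrow> h x \<in> I) \<Longrightarrow> sum h S \<in> I"
proof (induction S rule: infinite_finite_induct)
  case (infinite A)
  then show ?case by (simp add: is_ideal_def)
next
  case empty
  then show ?case by (simp add: is_ideal_def)
next
  case (insert x F)
  then show ?case by (simp add: is_ideal_def)
qed

lemma exists_min_cover:
  assumes "finite V" "vertex_cover V E C"
  shows "\<exists>C'\<subseteq>C. minimal_vertex_cover V E C'"
  using assms(2)
proof (induction "card C" arbitrary: C rule: less_induct)
  case less
  show ?case
  proof (cases "minimal_vertex_cover V E C")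
    case True
    then show ?thesis by blast
  next
    case False
    then obtain C'' where c: "C'' \<subset> C" "vertex_cover V E C''"
      using less.prems unfolding minimal_vertex_cover_def by blast
    have "finite C" using less.prems assms(1) unfolding vertex_cover_def by (blast intro: finite_subset)
    then have "card C'' < card C" using c by (simp add: psubset_card_mono)
    then show ?thesis using less.hyps c by (meson order.trans psubset_imp_subset)
  qed
qed

lemma cover_ideal_eq:
  assumes "simple_graph V E"
  shows "cover_ideal V E = (MI V E :: ('v, 'k::field) mpoly set)"
proof -
  have finV: "finite V" using assms unfolding simple_graph_def by simp
  define gens where "gens = ({(\<Prod>v\<in>C. var v) | C. minimal_vertex_cover V E C} :: ('v, 'k) mpoly set)"
  have gens_alt: "x \<in> gens \<longleftrightarrow> (\<exists>C. minimal_vertex_cover V E C \<and> x = Poly_Mapping.single (mon C) 1)" for x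
  proof -
    have "minimal_vertex_cover V E C \<Longrightarrow> finite C" for C
      using finV unfolding minimal_vertex_cover_def vertex_cover_def by (blast intro: finite_subset)
    then show ?thesis unfolding gens_def mem_Collect_eq
      by (metis (no_types, lifting) prod_var)
  qed
  have gens_MI: "gens \<subseteq> MI V E"
  proof
    fix x assume "x \<in> gens"
    then obtain C where C: "minimal_vertex_cover V E C" "x = Poly_Mapping.single (mon C) 1"
      using gens_alt by blast
    have "finite C" "C \<subseteq> V" "cov E C"
      using C finV unfolding minimal_vertex_cover_def vertex_cover_def cov_def
      by (auto intro: finite_subset simp: Int_commute)
    then show "x \<in> MI V E" unfolding MI_def using C(2) by (simp add: keys_mon pr_single)
  qed
  have sub1: "ideal_gen V gens \<subseteq> MI V E"
    unfolding ideal_gen_def using MI_ideal gens_MI by blast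
  have sub2: "MI V E \<subseteq> I" if I: "is_ideal V I" "gens \<subseteq> I" for I :: "('v, 'k) mpoly set"
  proof
    fix g :: "('v, 'k) mpoly" assume g: "g \<in> MI V E"
    have "Poly_Mapping.single m (Poly_Mapping.lookup g m) \<in> I" if m: "m \<in> Poly_Mapping.keys g" for m
    proof -
      have mV: "Poly_Mapping.keys m \<subseteq> V" using g m unfolding MI_def poly_ring_def by auto
      have "cov E (Poly_Mapping.keys m)" using g m unfolding MI_def by auto
      then have "vertex_cover V E (Poly_Mapping.keys m)" using mV unfolding vertex_cover_def cov_def
        by (auto simp: Int_commute)
      then obtain C where C: "C \<subseteq> Poly_Mapping.keys m" "minimal_vertex_cover V E C"
        using exists_min_cover[OF finV] by blast
      have finC: "finite C" by (rule finite_subset[OF C(1)]) simp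
      have madd: "(m - mon C) + mon C = m"
      proof (rule poly_mapping_eqI)
        fix v
        show "Poly_Mapping.lookup (m - mon C + mon C) v = Poly_Mapping.lookup m v"
          using C(1) finC by (auto simp: lookup_add lookup_minus lookup_mon in_keys_iff)
      qed
      have kd: "Poly_Mapping.keys (m - mon C) \<subseteq> V"
        using mV by (auto simp: in_keys_iff lookup_minus)
      have "Poly_Mapping.single m (Poly_Mapping.lookup g m) = Poly_Mapping.single (m - mon C) (Poly_Mapping.lookup g m) * Poly_Mapping.single (mon C) 1"
        by (simp add: mult_single madd)
      moreover have "Poly_Mapping.single (mon C) 1 \<in> I" using C(2) gens_alt I(2) by blast
      moreover have "Poly_Mapping.single (m - mon C) (Poly_Mapping.lookup g m) \<in> poly_ring V" using kd by (rule pr_single)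
      ultimately show ?thesis using I(1) unfolding is_ideal_def by simp
    qed
    then have "(\<Sum>m\<in>Poly_Mapping.keys g. Poly_Mapping.single m (Poly_Mapping.lookup g m)) \<in> I"
      by (rule ideal_sum[OF I(1)])
    moreover have "(\<Sum>m\<in>Poly_Mapping.keys g. Poly_Mapping.single m (Poly_Mapping.lookup g m)) = g"
      by (rule poly_expand[symmetric])
    ultimately show "g \<in> I" by simp
  qed
  have "ideal_gen V gens = MI V E"
  proof
    show "ideal_gen V gens \<subseteq> MI V E" by (rule sub1)
    show "MI V E \<subseteq> ideal_gen V gens" unfolding ideal_gen_def using sub2 by blast
  qed
  then show ?thesis unfolding cover_ideal_def gens_def .
qed

definition okeq :: "'v set \<Rightarrow> 'v set set \<Rightarrow> nat \<Rightarrow> bool" where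
  "okeq V E d \<longleftrightarrow> (\<exists>e\<in>E. \<exists>A. A \<subseteq> V \<and> A \<inter> e = {} \<and> card A = d \<and> (\<forall>e'\<in>E. e' \<noteq> e \<longrightarrow> e' \<inter> A \<noteq> {}))"

lemma MI_sub_Qe: "e \<in> E \<Longrightarrow> MI V E \<subseteq> Qe e"
  unfolding MI_def Qe_def cov_def by blast

lemma Qe_prime_ideal: "prime_ideal V (poly_ring V \<inter> Qe e :: ('v, 'k::field) mpoly set)"
  unfolding prime_ideal_def is_ideal_def
proof (intro conjI ballI impI)
  show "poly_ring V \<inter> Qe e \<subseteq> poly_ring V" by blast
  show "(0 :: ('v, 'k) mpoly) \<in> poly_ring V \<inter> Qe e" by (simp add: pr_zero Qe_zero)
  show "poly_ring V \<inter> Qe e \<noteq> (poly_ring V :: ('v, 'k) mpoly set)"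
    using pr_one one_notin_Qe by blast
next
  fix f g :: "('v, 'k) mpoly"
  assume "f \<in> poly_ring V \<inter> Qe e" "g \<in> poly_ring V \<inter> Qe e"
  then show "f + g \<in> poly_ring V \<inter> Qe e" by (simp add: pr_add Qe_add)
next
  fix r f :: "('v, 'k) mpoly"
  assume "r \<in> poly_ring V" "f \<in> poly_ring V \<inter> Qe e"
  then show "r * f \<in> poly_ring V \<inter> Qe e" by (simp add: pr_mult Qe_multL)
next
  fix f g :: "('v, 'k) mpoly"
  assume "f \<in> poly_ring V" "g \<in> poly_ring V" "f * g \<in> poly_ring V \<inter> Qe e"
  then show "f \<in> poly_ring V \<inter> Qe e \<or> g \<in> poly_ring V \<inter> Qe e" using Qe_prime by blast
qed

lemma prime_one: "prime_ideal V P \<Longrightarrow> (1::('v, 'k::field) mpoly) \<notin> P"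
proof
  assume p: "prime_ideal V P" and one: "1 \<in> P"
  have "poly_ring V \<subseteq> P"
  proof
    fix r :: "('v, 'k) mpoly" assume "r \<in> poly_ring V"
    then have "r * 1 \<in> P" using p one unfolding prime_ideal_def is_ideal_def by blast
    then show "r \<in> P" by simp
  qed
  then show False using p unfolding prime_ideal_def is_ideal_def by blast
qed

lemma keys_var: "Poly_Mapping.keys (var s :: ('v, 'k::field) mpoly) = {Poly_Mapping.single s 1}"
  unfolding var_def by simp

lemma prime_prod_var:
  assumes p: "prime_ideal V (P :: ('v, 'k::field) mpoly set)"
  shows "finite S \<Longrightarrow> S \<subseteq> V \<Longrightarrow> (\<Prod>s\<in>S. var s) \<in> P \<Longrightarrow> \<exists>s\<in>S. var s \<in> P"
proof (induction S rule: finite_induct)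
  case empty
  then show ?case using prime_one[OF p] by simp
next
  case (insert x F)
  have xR: "var x \<in> poly_ring V" using insert.prems by (simp add: pr_var)
  have FR: "(\<Prod>s\<in>F. var s) \<in> (poly_ring V :: ('v, 'k) mpoly set)"
    using insert.hyps(1) insert.prems(1) by (simp add: prod_var keys_mon pr_single)
  have "var x * (\<Prod>s\<in>F. var s) \<in> P" using insert by simp
  then have "var x \<in> P \<or> (\<Prod>s\<in>F. var s) \<in> P" using p xR FR unfolding prime_ideal_def by blast
  then show ?case using insert by blast
qed

lemma lower:
  assumes sg: "simple_graph V E"
    and fh: "f \<in> homog_comp V d"
    and PA: "P \<in> Ass V (MI V E :: ('v, 'k::field) mpoly set)"
    and col: "colon V (MI V E) f = P"
  shows "\<exists>d'\<le>d. okeq V E d'"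
proof -
  have finV: "finite V" using sg unfolding simple_graph_def by simp
  have edges: "e \<subseteq> V" "card e = 2" if "e \<in> E" for e
    using sg that unfolding simple_graph_def by auto
  have finE: "finite E"
    by (rule finite_subset[of E "Pow V"]) (use edges finV in auto)
  have fR: "f \<in> poly_ring V" and fdeg: "\<forall>m\<in>Poly_Mapping.keys f. mdeg m = d"
    using fh unfolding homog_comp_def by auto
  have pP: "prime_ideal V P" using PA unfolding Ass_def by simp
  have Pcol: "g \<in> P \<longleftrightarrow> g \<in> poly_ring V \<and> g * f \<in> MI V E" for g
    using col unfolding colon_def by blast
  define F where "F = {e\<in>E. f \<notin> Qe e}"
  have fMI: "f \<notin> MI V E"
  proof
    assume "f \<in> MI V E"
    then have "1 \<in> P" using Pcol pr_one by simp
    then show False using prime_one[OF pP] by simp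
  qed
  have "F \<noteq> {}"
  proof -
    obtain m where m: "m \<in> Poly_Mapping.keys f" "\<not> cov E (Poly_Mapping.keys m)"
      using fMI fR unfolding MI_def by blast
    then obtain e where "e \<in> E" "e \<inter> Poly_Mapping.keys m = {}" unfolding cov_def by blast
    then have "e \<in> F" using m(1) unfolding F_def Qe_def by blast
    then show ?thesis by blast
  qed
  then obtain e where eF: "e \<in> F" by blast
  have PQ: "g \<in> Qe e'" if "e' \<in> F" "g \<in> P" for e' g
  proof -
    have "g * f \<in> MI V E" using Pcol that(2) by blast
    then have "g * f \<in> Qe e'" using MI_sub_Qe that(1) unfolding F_def by blast
    then show ?thesis using Qe_prime that(1) unfolding F_def by blast
  qed
  have diff: "x - y \<noteq> {}" if "x \<in> E" "y \<in> E" "x \<noteq> y" for x y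
  proof
    assume "x - y = {}"
    then have "x \<subseteq> y" by blast
    moreover have "finite y" "card x = card y" using edges[OF that(1)] edges[OF that(2)]
      by (auto intro: card_ge_0_finite)
    ultimately show False using that(3) card_subset_eq by blast
  qed
  have uniq: "e1 = e0" if e0: "e0 \<in> F" and e1: "e1 \<in> F" for e0 e1
  proof (rule ccontr)
    assume ne: "e1 \<noteq> e0"
    have E0: "e0 \<in> E" and E1: "e1 \<in> E" using e0 e1 unfolding F_def by auto
    define c where "c = (\<lambda>x. if x = e0 then (SOME v. v \<in> e0 - e1) else (SOME v. v \<in> x - e0))"
    have c0: "c e0 \<in> e0 - e1"
    proof -
      obtain v where "v \<in> e0 - e1" using diff[OF E0 E1] ne by blast
      then have "(SOME v. v \<in> e0 - e1) \<in> e0 - e1" by (rule someI)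
      then show ?thesis unfolding c_def by simp
    qed
    have c1: "c x \<in> x - e0" if xF: "x \<in> F" and xn: "x \<noteq> e0" for x
    proof -
      have "x \<in> E" using xF unfolding F_def by simp
      then obtain v where "v \<in> x - e0" using diff[of x e0] xn E0 by blast
      then have "(SOME v. v \<in> x - e0) \<in> x - e0" by (rule someI)
      then show ?thesis unfolding c_def using xn by simp
    qed
    have cin: "c x \<in> x" if "x \<in> F" for x
      using c0 c1 that by (cases "x = e0") auto
    define S where "S = c ` F"
    have finF: "finite F" using finE unfolding F_def by simp
    have finS: "finite S" unfolding S_def using finF by simp
    have SV: "S \<subseteq> V" unfolding S_def using cin edges unfolding F_def by blast
    have tS: "(\<Prod>s\<in>S. var s) = (Poly_Mapping.single (mon S) 1 :: ('v, 'k) mpoly)"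
      using finS by (rule prod_var)
    have tSR: "(Poly_Mapping.single (mon S) 1 :: ('v, 'k) mpoly) \<in> poly_ring V"
      using finS SV by (simp add: keys_mon pr_single)
    have "Poly_Mapping.single (mon S) 1 * f \<in> MI V E"
    proof -
      have "Poly_Mapping.single (mon S) 1 * f \<in> poly_ring V" using tSR fR by (rule pr_mult)
      moreover have "cov E (Poly_Mapping.keys m)" if m: "m \<in> Poly_Mapping.keys (Poly_Mapping.single (mon S) (1::'k) * f)" for m
      proof -
        obtain a b where ab: "a \<in> Poly_Mapping.keys (Poly_Mapping.single (mon S) (1::'k))"
            "b \<in> Poly_Mapping.keys f" "m = a + b"
          using keys_mult[of "Poly_Mapping.single (mon S) (1::'k)" f] m by blast
        have km: "Poly_Mapping.keys m = S \<union> Poly_Mapping.keys b"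
          using ab finS by (simp add: keys_add_nat keys_mon)
        show ?thesis unfolding cov_def
        proof
          fix x assume xE: "x \<in> E"
          show "x \<inter> Poly_Mapping.keys m \<noteq> {}"
          proof (cases "x \<in> F")
            case True
            then have "c x \<in> x \<inter> S" using cin unfolding S_def by blast
            then show ?thesis unfolding km by blast
          next
            case False
            then have "f \<in> Qe x" using xE unfolding F_def by blast
            then have "Poly_Mapping.keys b \<inter> x \<noteq> {}" using ab(2) unfolding Qe_def by blast
            then show ?thesis unfolding km by blast
          qed
        qed
      qed
      ultimately show ?thesis unfolding MI_def by blast
    qed
    then have "(\<Prod>s\<in>S. var s) \<in> P" using Pcol tSR tS by simp
    then obtain s where s: "s \<in> S" "var s \<in> P" using prime_prod_var[OF pP finS SV] by blast
    have sin: "s \<in> x" if "x \<in> F" for x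
    proof -
      have "(var s :: ('v, 'k) mpoly) \<in> Qe x" using PQ[OF that s(2)] .
      then show ?thesis unfolding Qe_def by (simp add: keys_var)
    qed
    obtain x where x: "x \<in> F" "s = c x" using s(1) unfolding S_def by blast
    show False
    proof (cases "x = e0")
      case True
      then show False using c0 sin[OF e1] x by simp
    next
      case False
      then show False using c1[OF x(1) False] sin[OF e0] x by simp
    qed
  qed
  obtain m where m: "m \<in> Poly_Mapping.keys f" "Poly_Mapping.keys m \<inter> e = {}"
    using eF unfolding F_def Qe_def by blast
  have AV: "Poly_Mapping.keys m \<subseteq> V" using fR m(1) unfolding poly_ring_def by blast
  have eE: "e \<in> E" using eF unfolding F_def by simp
  have oth: "e' \<inter> Poly_Mapping.keys m \<noteq> {}" if "e' \<in> E" "e' \<noteq> e" for e'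
  proof -
    have "e' \<notin> F" using uniq[OF eF] that(2) by blast
    then have "f \<in> Qe e'" using that(1) unfolding F_def by blast
    then show ?thesis using m(1) unfolding Qe_def by blast
  qed
  have "okeq V E (card (Poly_Mapping.keys m))"
    unfolding okeq_def using eE AV m(2) oth by (intro bexI[of _ e] exI[of _ "Poly_Mapping.keys m"]) auto
  moreover have "card (Poly_Mapping.keys m) \<le> d" using card_keys_le_mdeg[of m] fdeg m(1) by simp
  ultimately show ?thesis by blast
qed

lemma keys_mult_single_one:
  fixes g :: "('v, 'k::field) mpoly"
  shows "Poly_Mapping.keys (g * Poly_Mapping.single k 1) = (\<lambda>m. m + k) ` Poly_Mapping.keys g"
proof
  show "Poly_Mapping.keys (g * Poly_Mapping.single k 1) \<subseteq> (\<lambda>m. m + k) ` Poly_Mapping.keys g"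
  proof
    fix x assume "x \<in> Poly_Mapping.keys (g * Poly_Mapping.single k 1)"
    then obtain a b where "a \<in> Poly_Mapping.keys g" "b \<in> Poly_Mapping.keys (Poly_Mapping.single k (1::'k))" "x = a + b"
      using keys_mult[of g "Poly_Mapping.single k (1::'k)"] by blast
    then show "x \<in> (\<lambda>m. m + k) ` Poly_Mapping.keys g" by simp
  qed
  show "(\<lambda>m. m + k) ` Poly_Mapping.keys g \<subseteq> Poly_Mapping.keys (g * Poly_Mapping.single k 1)"
  proof
    fix x assume "x \<in> (\<lambda>m. m + k) ` Poly_Mapping.keys g"
    then obtain m where m: "m \<in> Poly_Mapping.keys g" "x = m + k" by blast
    have "Poly_Mapping.lookup (g * Poly_Mapping.single k 1) (m + k) = Poly_Mapping.lookup g m"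
      using lookup_mult_single_right[of g k "1::'k" m] by simp
    then show "x \<in> Poly_Mapping.keys (g * Poly_Mapping.single k 1)" using m by (simp add: in_keys_iff)
  qed
qed

lemma upper:
  assumes sg: "simple_graph V E" and ok: "okeq V E d"
  shows "\<exists>f\<in>homog_comp V d. \<exists>P\<in>Ass V (MI V E :: ('v, 'k::field) mpoly set). colon V (MI V E) f = P"
proof -
  have finV: "finite V" using sg unfolding simple_graph_def by simp
  obtain e A where eE: "e \<in> E" and AV: "A \<subseteq> V" and Ae: "A \<inter> e = {}" and cA: "card A = d"
    and oth: "\<forall>e'\<in>E. e' \<noteq> e \<longrightarrow> e' \<inter> A \<noteq> {}"
    using ok unfolding okeq_def by (elim bexE exE conjE) blast
  have finA: "finite A" using finV AV by (rule rev_finite_subset)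
  define f :: "('v, 'k) mpoly" where "f = Poly_Mapping.single (mon A) 1"
  have fR: "f \<in> poly_ring V" unfolding f_def using finA AV by (simp add: keys_mon pr_single)
  have fh: "f \<in> homog_comp V d" unfolding homog_comp_def using fR finA cA
    by (simp add: f_def mdeg_mon)
  define P where "P = poly_ring V \<inter> (Qe e :: ('v, 'k) mpoly set)"
  have pP: "prime_ideal V P" unfolding P_def by (rule Qe_prime_ideal)
  have covk: "cov E (Poly_Mapping.keys m \<union> A) \<longleftrightarrow> Poly_Mapping.keys m \<inter> e \<noteq> {}" for m :: "'v \<Rightarrow>\<^sub>0 nat"
    unfolding cov_def using eE Ae oth by blast
  have col: "colon V (MI V E) f = P"
  proof (rule set_eqI)
    fix g :: "('v, 'k) mpoly"
    show "g \<in> colon V (MI V E) f \<longleftrightarrow> g \<in> P"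
    proof (cases "g \<in> poly_ring V")
      case False
      then show ?thesis unfolding colon_def P_def by blast
    next
      case True
      have gfR: "g * f \<in> poly_ring V" using True fR by (rule pr_mult)
      have kk: "Poly_Mapping.keys (g * f) = (\<lambda>m. m + mon A) ` Poly_Mapping.keys g"
        unfolding f_def by (rule keys_mult_single_one)
      have km: "Poly_Mapping.keys (m + mon A) = Poly_Mapping.keys m \<union> A" for m
        using finA by (simp add: keys_add_nat keys_mon)
      have "g * f \<in> MI V E \<longleftrightarrow> (\<forall>m\<in>Poly_Mapping.keys g. cov E (Poly_Mapping.keys m \<union> A))"
        unfolding MI_def using gfR kk km by auto
      also have "\<dots> \<longleftrightarrow> g \<in> Qe e" unfolding Qe_def using covk by simp
      finally show ?thesis unfolding colon_def P_def using True by blast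
    qed
  qed
  have "P \<in> Ass V (MI V E)" unfolding Ass_def using pP fR col by blast
  then show ?thesis using fh col by blast
qed

lemma vnum:
  assumes sg: "simple_graph V E"
  shows "v_number V (cover_ideal V E :: ('v, 'k::field) mpoly set) = Inf {enat d | d. okeq V E d}"
proof -
  define \<Phi> where "\<Phi> = (\<lambda>d. \<exists>f\<in>homog_comp V d. \<exists>P\<in>Ass V (MI V E :: ('v, 'k) mpoly set). colon V (MI V E) f = P)"
  have vn: "v_number V (cover_ideal V E :: ('v, 'k) mpoly set) = (if \<exists>d. \<Phi> d then enat (LEAST d. \<Phi> d) else \<infinity>)"
    unfolding v_number_def cover_ideal_eq[OF sg] \<Phi>_def by simp
  have up: "\<Phi> d" if "okeq V E d" for d unfolding \<Phi>_def using upper[OF sg that] by blast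
  have lo: "\<exists>d'\<le>d. okeq V E d'" if "\<Phi> d" for d
    using that lower[OF sg] unfolding \<Phi>_def by blast
  show ?thesis
  proof (cases "\<exists>d. \<Phi> d")
    case True
    have "enat (LEAST d. \<Phi> d) = Inf {enat d | d. okeq V E d}"
    proof (rule antisym)
      show "enat (LEAST d. \<Phi> d) \<le> Inf {enat d | d. okeq V E d}"
      proof (rule Inf_greatest)
        fix x assume "x \<in> {enat d | d. okeq V E d}"
        then obtain d where "x = enat d" "okeq V E d" by blast
        then show "enat (LEAST d. \<Phi> d) \<le> x" using up Least_le by fastforce
      qed
      have "\<Phi> (LEAST d. \<Phi> d)" using True by (rule LeastI_ex)
      then obtain d' where d': "d' \<le> (LEAST d. \<Phi> d)" "okeq V E d'" using lo by blast
      then have "Inf {enat d | d. okeq V E d} \<le> enat d'" by (blast intro: Inf_lower)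
      also have "\<dots> \<le> enat (LEAST d. \<Phi> d)" using d'(1) by simp
      finally show "Inf {enat d | d. okeq V E d} \<le> enat (LEAST d. \<Phi> d)" .
    qed
    then show ?thesis using vn True by simp
  next
    case False
    then have "{enat d | d. okeq V E d} = {}" using up by blast
    then show ?thesis using vn False by (simp add: top_enat_def)
  qed
qed

lemma Inf_enat_in: "S \<noteq> {} \<Longrightarrow> Inf S \<in> (S :: enat set)"
  unfolding Inf_enat_def by (auto intro: LeastI)

lemma join_comm: "join_edges V1 E1 V2 E2 = join_edges V2 E2 V1 E1"
  unfolding join_edges_def by (auto simp: insert_commute)

lemma join_simple:
  assumes "simple_graph V1 E1" "simple_graph V2 E2" "V1 \<inter> V2 = {}"
  shows "simple_graph (V1 \<union> V2) (join_edges V1 E1 V2 E2)"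
proof -
  have "card {a, b} = 2" if "a \<in> V1" "b \<in> V2" for a b
  proof -
    have "a \<noteq> b" using that assms(3) by blast
    then show ?thesis by simp
  qed
  then show ?thesis using assms unfolding simple_graph_def join_edges_def by blast
qed

lemma empty_multipartite:
  assumes "V1 \<noteq> {}" "V2 \<noteq> {}" "V1 \<inter> V2 = {}"
  shows "complete_multipartite (V1 \<union> V2) (join_edges V1 {} V2 {})"
  unfolding complete_multipartite_def
proof (intro exI[of _ "{V1, V2}"] conjI)
  have neq: "V1 \<noteq> V2" using assms by blast
  then show "card {V1, V2} \<ge> 2" by simp
  show "join_edges V1 {} V2 {} = {{a, b} |a b. \<exists>B\<in>{V1, V2}. \<exists>B'\<in>{V1, V2}. B \<noteq> B' \<and> a \<in> B \<and> b \<in> B'}"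
    unfolding join_edges_def using neq by (auto simp: insert_commute)
qed (use assms in auto)

lemma edge_facts:
  assumes "simple_graph V E" "e \<in> E"
  shows "e \<subseteq> V" "card e = 2" "finite e" "e \<noteq> {}"
  using assms unfolding simple_graph_def by (auto intro: card_ge_0_finite)

lemma edge_diff:
  assumes "simple_graph V E" "x \<in> E" "y \<in> E" "x \<noteq> y"
  shows "x - y \<noteq> {}"
proof
  assume "x - y = {}"
  then have "x \<subseteq> y" by blast
  moreover have "finite y" "card x = card y" using edge_facts[OF assms(1,2)] edge_facts[OF assms(1,3)] by auto
  ultimately show False using assms(4) card_subset_eq by blast
qed

lemma H_witness:
  assumes s1: "simple_graph V1 E1" and s2: "simple_graph V2 E2" and dj: "V1 \<inter> V2 = {}"
    and ok: "okeq V1 E1 d1"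
  shows "okeq (V1 \<union> V2) (join_edges V1 E1 V2 E2) (d1 + card V2)"
proof -
  obtain e A where eE: "e \<in> E1" and AV: "A \<subseteq> V1" and Ae: "A \<inter> e = {}" and cA: "card A = d1"
    and oth: "\<forall>e'\<in>E1. e' \<noteq> e \<longrightarrow> e' \<inter> A \<noteq> {}"
    using ok unfolding okeq_def by (elim bexE exE conjE) blast
  have fin1: "finite V1" "finite V2" using s1 s2 unfolding simple_graph_def by auto
  have eV: "e \<subseteq> V1" using edge_facts[OF s1 eE] by simp
  have card: "card (A \<union> V2) = d1 + card V2"
    using cA AV dj fin1 by (subst card_Un_disjoint) (auto intro: finite_subset)
  have cov: "e' \<inter> (A \<union> V2) \<noteq> {}" if e': "e' \<in> join_edges V1 E1 V2 E2" "e' \<noteq> e" for e'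
  proof -
    consider (a) "e' \<in> E1" | (b) "e' \<in> E2" | (c) x y where "x \<in> V1" "y \<in> V2" "e' = {x, y}"
      using e'(1) unfolding join_edges_def by blast
    then show ?thesis
    proof cases
      case a
      then show ?thesis using oth e'(2) by blast
    next
      case b
      then have "e' \<subseteq> V2" "e' \<noteq> {}" using edge_facts[OF s2 b] by auto
      then show ?thesis by blast
    next
      case c
      then show ?thesis by blast
    qed
  qed
  show ?thesis unfolding okeq_def
  proof (intro bexI[of _ e] exI[of _ "A \<union> V2"] conjI)
    show "e \<in> join_edges V1 E1 V2 E2" using eE unfolding join_edges_def by blast
    show "A \<union> V2 \<subseteq> V1 \<union> V2" using AV by blast
    show "(A \<union> V2) \<inter> e = {}" using Ae eV dj by blast
    show "card (A \<union> V2) = d1 + card V2" by (rule card)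
    show "\<forall>e'\<in>join_edges V1 E1 V2 E2. e' \<noteq> e \<longrightarrow> e' \<inter> (A \<union> V2) \<noteq> {}" using cov by blast
  qed
qed

lemma H_inner:
  assumes s1: "simple_graph V1 E1" and s2: "simple_graph V2 E2" and dj: "V1 \<inter> V2 = {}"
    and eE: "e \<in> E1" and AV: "A \<subseteq> V1 \<union> V2" and Ae: "A \<inter> e = {}"
    and oth: "\<forall>e'\<in>join_edges V1 E1 V2 E2. e' \<noteq> e \<longrightarrow> e' \<inter> A \<noteq> {}"
  shows "\<exists>d1. okeq V1 E1 d1 \<and> d1 + card V2 = card A"
proof -
  have fin1: "finite V1" "finite V2" using s1 s2 unfolding simple_graph_def by auto
  have eV: "e \<subseteq> V1" "e \<noteq> {}" using edge_facts[OF s1 eE] by auto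
  obtain x where x: "x \<in> e" using eV(2) by blast
  have V2A: "V2 \<subseteq> A"
  proof
    fix v assume v: "v \<in> V2"
    have m1: "{x, v} \<in> join_edges V1 E1 V2 E2" using x eV v unfolding join_edges_def by blast
    have "v \<notin> e" using v eV dj by blast
    then have m2: "{x, v} \<noteq> e" by blast
    have "{x, v} \<inter> A \<noteq> {}" by (rule oth[rule_format, OF m1 m2])
    then show "v \<in> A" using x Ae by blast
  qed
  define A1 where "A1 = A - V2"
  have A1V: "A1 \<subseteq> V1" using AV unfolding A1_def by blast
  have ok: "okeq V1 E1 (card A1)" unfolding okeq_def
  proof (intro bexI[of _ e] exI[of _ A1] conjI)
    show "A1 \<subseteq> V1" by (rule A1V)
    show "A1 \<inter> e = {}" using Ae unfolding A1_def by blast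
    show "card A1 = card A1" ..
    show "\<forall>e'\<in>E1. e' \<noteq> e \<longrightarrow> e' \<inter> A1 \<noteq> {}"
    proof (intro ballI impI)
      fix e' assume e': "e' \<in> E1" "e' \<noteq> e"
      then have "e' \<inter> A \<noteq> {}" using oth unfolding join_edges_def by blast
      moreover have "e' \<subseteq> V1" using edge_facts[OF s1 e'(1)] by simp
      ultimately show "e' \<inter> A1 \<noteq> {}" using dj unfolding A1_def by blast
    qed
  qed (use eE in simp)
  have "A = A1 \<union> V2" using V2A unfolding A1_def by blast
  moreover have "finite A1" using A1V fin1 by (blast intro: finite_subset)
  ultimately have "card A = card A1 + card V2" using fin1 dj A1V
    by (simp add: card_Un_disjoint disjoint_iff) (metis card_Un_disjoint disjoint_iff subsetD)
  then show ?thesis using ok by auto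
qed

lemma H_cross_bound:
  assumes s1: "simple_graph V1 E1" and ne: "E1 \<noteq> {}"
  shows "\<exists>d1. okeq V1 E1 d1 \<and> d1 + 2 = card V1"
proof -
  obtain e where eE: "e \<in> E1" using ne by blast
  have fin1: "finite V1" using s1 unfolding simple_graph_def by auto
  have ef: "e \<subseteq> V1" "card e = 2" "finite e" using edge_facts[OF s1 eE] by auto
  have ok: "okeq V1 E1 (card (V1 - e))" unfolding okeq_def
  proof (intro bexI[of _ e] exI[of _ "V1 - e"] conjI)
    show "\<forall>e'\<in>E1. e' \<noteq> e \<longrightarrow> e' \<inter> (V1 - e) \<noteq> {}"
    proof (intro ballI impI)
      fix e' assume e': "e' \<in> E1" "e' \<noteq> e"
      have "e' - e \<noteq> {}" using edge_diff[OF s1 e'(1) eE e'(2)] .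
      moreover have "e' \<subseteq> V1" using edge_facts[OF s1 e'(1)] by simp
      ultimately show "e' \<inter> (V1 - e) \<noteq> {}" by blast
    qed
  qed (use eE in auto)
  have "card e \<le> card V1" using ef(1) fin1 by (rule card_mono[rotated])
  then have "card (V1 - e) + 2 = card V1" using ef fin1 by (simp add: card_Diff_subset)
  then show ?thesis using ok by blast
qed

lemma H_cross:
  assumes s1: "simple_graph V1 E1" and s2: "simple_graph V2 E2" and dj: "V1 \<inter> V2 = {}"
    and a: "a \<in> V1" and b: "b \<in> V2" and AV: "A \<subseteq> V1 \<union> V2" and Ae: "A \<inter> {a, b} = {}"
    and oth: "\<forall>e'\<in>join_edges V1 E1 V2 E2. e' \<noteq> {a, b} \<longrightarrow> e' \<inter> A \<noteq> {}"
  shows "card V1 + card V2 \<le> card A + 2"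
proof -
  have fin1: "finite V1" "finite V2" using s1 s2 unfolding simple_graph_def by auto
  have sub: "(V1 \<union> V2) - {a, b} \<subseteq> A"
  proof
    fix v assume v: "v \<in> (V1 \<union> V2) - {a, b}"
    show "v \<in> A"
    proof (cases "v \<in> V1")
      case True
      have m1: "{v, b} \<in> join_edges V1 E1 V2 E2" using True b unfolding join_edges_def by blast
      have "v \<noteq> a" "v \<noteq> b" using v by auto
      then have m2: "{v, b} \<noteq> {a, b}" by (auto simp: doubleton_eq_iff)
      have "{v, b} \<inter> A \<noteq> {}" by (rule oth[rule_format, OF m1 m2])
      then show ?thesis using Ae by blast
    next
      case False
      then have vV2: "v \<in> V2" using v by blast
      have m1: "{a, v} \<in> join_edges V1 E1 V2 E2" using a vV2 unfolding join_edges_def by blast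
      have "v \<noteq> a" "v \<noteq> b" using v by auto
      then have m2: "{a, v} \<noteq> {a, b}" by (auto simp: doubleton_eq_iff)
      have "{a, v} \<inter> A \<noteq> {}" by (rule oth[rule_format, OF m1 m2])
      then show ?thesis using Ae by blast
    qed
  qed
  have finA: "finite A" using AV fin1 by (blast intro: finite_subset)
  have "card ((V1 \<union> V2) - {a, b}) \<le> card A" using sub finA by (rule card_mono[rotated])
  moreover have "card (V1 \<union> V2) = card V1 + card V2" using fin1 dj by (simp add: card_Un_disjoint)
  moreover have "card ((V1 \<union> V2) - {a, b}) = card (V1 \<union> V2) - 2"
  proof -
    have "a \<noteq> b" using a b dj by blast
    then show ?thesis using a b fin1 by (simp add: card_Diff_subset)
  qed
  ultimately show ?thesis by linarith
qed

theorem proposition3p12: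
  fixes V1 V2 :: "'v set" and E1 E2 :: "'v set set"
  assumes "simple_graph V1 E1" and "simple_graph V2 E2"
    and "V1 \<noteq> {}" and "V2 \<noteq> {}"
    and "V1 \<inter> V2 = {}"
    and "\<not> complete_multipartite (V1 \<union> V2) (join_edges V1 E1 V2 E2)"
  shows "v_number (V1 \<union> V2) (cover_ideal (V1 \<union> V2) (join_edges V1 E1 V2 E2) :: ('v, 'k::field) mpoly set)
           = min (v_number V1 (cover_ideal V1 E1 :: ('v, 'k) mpoly set) + enat (card V2))
                 (v_number V2 (cover_ideal V2 E2 :: ('v, 'k) mpoly set) + enat (card V1))
       \<and> (E2 = {} \<longrightarrow>
           v_number (V1 \<union> V2) (cover_ideal (V1 \<union> V2) (join_edges V1 E1 V2 E2) :: ('v, 'k) mpoly set)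
           = v_number V1 (cover_ideal V1 E1 :: ('v, 'k) mpoly set) + enat (card V2))"
proof -
  note s1 = assms(1) and s2 = assms(2) and dj = assms(5)
  have dj': "V2 \<inter> V1 = {}" using dj by blast
  define J where "J = join_edges V1 E1 V2 E2"
  have sG: "simple_graph (V1 \<union> V2) J" unfolding J_def using s1 s2 dj by (rule join_simple)
  define S1 where "S1 = {enat d | d. okeq V1 E1 d}"
  define S2 where "S2 = {enat d | d. okeq V2 E2 d}"
  define SG where "SG = {enat d | d. okeq (V1 \<union> V2) J d}"
  have vG: "v_number (V1 \<union> V2) (cover_ideal (V1 \<union> V2) J :: ('v, 'k) mpoly set) = Inf SG"
    unfolding SG_def by (rule vnum[OF sG])
  have v1: "v_number V1 (cover_ideal V1 E1 :: ('v, 'k) mpoly set) = Inf S1"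
    unfolding S1_def by (rule vnum[OF s1])
  have v2: "v_number V2 (cover_ideal V2 E2 :: ('v, 'k) mpoly set) = Inf S2"
    unfolding S2_def by (rule vnum[OF s2])
  have notboth: "E1 \<noteq> {} \<or> E2 \<noteq> {}"
  proof (rule ccontr)
    assume "\<not> (E1 \<noteq> {} \<or> E2 \<noteq> {})"
    then have "E1 = {}" "E2 = {}" by auto
    then show False using assms(6) empty_multipartite[OF assms(3,4,5)] by simp
  qed
  have W1: "okeq (V1 \<union> V2) J (d1 + card V2)" if "okeq V1 E1 d1" for d1
    unfolding J_def using H_witness[OF s1 s2 dj that] .
  have W2: "okeq (V1 \<union> V2) J (d2 + card V1)" if "okeq V2 E2 d2" for d2
    using H_witness[OF s2 s1 dj' that] unfolding J_def by (simp add: join_comm Un_commute)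
  have L: "(\<exists>d1. okeq V1 E1 d1 \<and> d1 + card V2 \<le> d) \<or> (\<exists>d2. okeq V2 E2 d2 \<and> d2 + card V1 \<le> d)"
    if ok: "okeq (V1 \<union> V2) J d" for d
  proof -
    obtain e A where eE: "e \<in> J" and AV: "A \<subseteq> V1 \<union> V2" and Ae: "A \<inter> e = {}" and cA: "card A = d"
      and oth: "\<forall>e'\<in>J. e' \<noteq> e \<longrightarrow> e' \<inter> A \<noteq> {}"
      using ok unfolding okeq_def by (elim bexE exE conjE) blast
    consider (a) "e \<in> E1" | (b) "e \<in> E2" | (c) x y where "x \<in> V1" "y \<in> V2" "e = {x, y}"
      using eE unfolding J_def join_edges_def by blast
    then show ?thesis
    proof cases
      case a
      then show ?thesis using H_inner[OF s1 s2 dj a AV Ae] oth cA unfolding J_def by auto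
    next
      case b
      have AV': "A \<subseteq> V2 \<union> V1" using AV by blast
      have oth': "\<forall>e'\<in>join_edges V2 E2 V1 E1. e' \<noteq> e \<longrightarrow> e' \<inter> A \<noteq> {}"
        using oth unfolding J_def by (simp add: join_comm)
      show ?thesis using H_inner[OF s2 s1 dj' b AV' Ae oth'] cA by auto
    next
      case c
      have "card V1 + card V2 \<le> card A + 2"
        using H_cross[OF s1 s2 dj c(1,2) AV] Ae oth c(3) unfolding J_def by blast
      then show ?thesis
      proof (cases "E1 \<noteq> {}")
        case True
        then obtain d1 where "okeq V1 E1 d1" "d1 + 2 = card V1" using H_cross_bound[OF s1] by blast
        then show ?thesis using \<open>card V1 + card V2 \<le> card A + 2\<close> cA by auto
      next
        case False
        then have "E2 \<noteq> {}" using notboth by blast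
        then obtain d2 where "okeq V2 E2 d2" "d2 + 2 = card V2" using H_cross_bound[OF s2] by blast
        then show ?thesis using \<open>card V1 + card V2 \<le> card A + 2\<close> cA by auto
      qed
    qed
  qed
  have le1: "Inf SG \<le> Inf S1 + enat (card V2)"
  proof (cases "S1 = {}")
    case True
    then show ?thesis by (simp add: top_enat_def)
  next
    case False
    then have "Inf S1 \<in> S1" by (rule Inf_enat_in)
    then obtain d1 where d1: "Inf S1 = enat d1" "okeq V1 E1 d1" unfolding S1_def by blast
    then have "enat (d1 + card V2) \<in> SG" unfolding SG_def using W1 by blast
    then have "Inf SG \<le> enat (d1 + card V2)" by (rule Inf_lower)
    then show ?thesis using d1 by simp
  qed
  have le2: "Inf SG \<le> Inf S2 + enat (card V1)"
  proof (cases "S2 = {}")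
    case True
    then show ?thesis by (simp add: top_enat_def)
  next
    case False
    then have "Inf S2 \<in> S2" by (rule Inf_enat_in)
    then obtain d2 where d2: "Inf S2 = enat d2" "okeq V2 E2 d2" unfolding S2_def by blast
    then have "enat (d2 + card V1) \<in> SG" unfolding SG_def using W2 by blast
    then have "Inf SG \<le> enat (d2 + card V1)" by (rule Inf_lower)
    then show ?thesis using d2 by simp
  qed
  have ge: "min (Inf S1 + enat (card V2)) (Inf S2 + enat (card V1)) \<le> Inf SG"
  proof (cases "SG = {}")
    case True
    then show ?thesis by (simp add: top_enat_def)
  next
    case False
    then have "Inf SG \<in> SG" by (rule Inf_enat_in)
    then obtain d where d: "Inf SG = enat d" "okeq (V1 \<union> V2) J d" unfolding SG_def by blast
    from L[OF d(2)] show ?thesis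
    proof
      assume "\<exists>d1. okeq V1 E1 d1 \<and> d1 + card V2 \<le> d"
      then obtain d1 where d1: "okeq V1 E1 d1" "d1 + card V2 \<le> d" by blast
      have "Inf S1 \<le> enat d1" using d1(1) unfolding S1_def by (blast intro: Inf_lower)
      then have "Inf S1 + enat (card V2) \<le> enat d1 + enat (card V2)" by (rule add_right_mono)
      also have "\<dots> \<le> enat d" using d1(2) by simp
      finally show ?thesis using d(1) by (simp add: min.coboundedI1)
    next
      assume "\<exists>d2. okeq V2 E2 d2 \<and> d2 + card V1 \<le> d"
      then obtain d2 where d2: "okeq V2 E2 d2" "d2 + card V1 \<le> d" by blast
      have "Inf S2 \<le> enat d2" using d2(1) unfolding S2_def by (blast intro: Inf_lower)
      then have "Inf S2 + enat (card V1) \<le> enat d2 + enat (card V1)" by (rule add_right_mono)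
      also have "\<dots> \<le> enat d" using d2(2) by simp
      finally show ?thesis using d(1) by (simp add: min.coboundedI2)
    qed
  qed
  have main: "Inf SG = min (Inf S1 + enat (card V2)) (Inf S2 + enat (card V1))"
    using le1 le2 ge by (simp add: antisym)
  have partb: "Inf SG = Inf S1 + enat (card V2)" if "E2 = {}"
  proof -
    have "S2 = {}" unfolding S2_def okeq_def using that by simp
    then show ?thesis using main by (simp add: top_enat_def)
  qed
  have vG': "v_number (V1 \<union> V2) (cover_ideal (V1 \<union> V2) (join_edges V1 E1 V2 E2) :: ('v, 'k) mpoly set) = Inf SG"
    using vG unfolding J_def .
  show ?thesis
  proof (intro conjI impI)
    show "v_number (V1 \<union> V2) (cover_ideal (V1 \<union> V2) (join_edges V1 E1 V2 E2) :: ('v, 'k) mpoly set)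
           = min (v_number V1 (cover_ideal V1 E1 :: ('v, 'k) mpoly set) + enat (card V2))
                 (v_number V2 (cover_ideal V2 E2 :: ('v, 'k) mpoly set) + enat (card V1))"
      by (simp only: vG' v1 v2 main)
    assume h: "E2 = {}"
    show "v_number (V1 \<union> V2) (cover_ideal (V1 \<union> V2) (join_edges V1 E1 V2 E2) :: ('v, 'k) mpoly set)
           = v_number V1 (cover_ideal V1 E1 :: ('v, 'k) mpoly set) + enat (card V2)"
      by (simp only: vG' v1 partb[OF h])
  qed
qed

end
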